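(* For all sufficiently large $n$, there is a nonempty set $\mathcal{A}\subsetneq\{0,1\}^n$ such that every first-order sentence over $\tau_{\mathsf{string}}$ that is true in $\mathbf{B}_w$ for all $w\in\mathcal{A}$ and false in $\mathbf{B}_{w'}$ for all $w'\in\{0,1\}^n\setminus\mathcal{A}$ has at least $n/\log_2 n$ quantifiers.
   Context: Vocabulary $\tau_{\mathsf{string}}=\langle <, S;\ \mathsf{min},\mathsf{max}\rangle$ with $<$ binary, $S$ unary, $\mathsf{min},\mathsf{max}$ constants. A string $w=w_1\cdots w_n\in\{0,1\}^n$ ($n\geq 1$) is encoded by the structure $\mathbf{B}_w$ with universe $\{1,\dots,n\}$, $<$ the usual order, $S=\{i: w_i=1\}$, $\mathsf{min}=1$, $\mathsf{max}=n$. The number of quantifiers is the number of quantifier occurrences. *)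

theory Defs
  imports Complex_Main
begin

text \<open>First-order logic over the vocabulary tau_string = (<, S; min, max), with equality.
  Variables are indexed by natural numbers.\<close>

datatype sterm = V nat | MinC | MaxC

datatype sfm =
    FTrue | FFalse
  | Eq sterm sterm
  | Less sterm sterm
  | Sat sterm
  | Neg sfm
  | Conj sfm sfm
  | Disj sfm sfm
  | Imp sfm sfm
  | Iff sfm sfm
  | Ex nat sfm
  | All nat sfm

fun tvars :: "sterm \<Rightarrow> nat set" where
  "tvars (V x) = {x}" | "tvars MinC = {}" | "tvars MaxC = {}"

fun freevars :: "sfm \<Rightarrow> nat set" where
  "freevars FTrue = {}"
| "freevars FFalse = {}"
| "freevars (Eq s t) = tvars s \<union> tvars t"
| "freevars (Less s t) = tvars s \<union> tvars t"
| "freevars (Sat t) = tvars t"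
| "freevars (Neg p) = freevars p"
| "freevars (Conj p q) = freevars p \<union> freevars q"
| "freevars (Disj p q) = freevars p \<union> freevars q"
| "freevars (Imp p q) = freevars p \<union> freevars q"
| "freevars (Iff p q) = freevars p \<union> freevars q"
| "freevars (Ex x p) = freevars p - {x}"
| "freevars (All x p) = freevars p - {x}"

definition sentence :: "sfm \<Rightarrow> bool" where
  "sentence p \<longleftrightarrow> freevars p = {}"

fun nquant :: "sfm \<Rightarrow> nat" where
  "nquant FTrue = 0"
| "nquant FFalse = 0"
| "nquant (Eq s t) = 0"
| "nquant (Less s t) = 0"
| "nquant (Sat t) = 0"
| "nquant (Neg p) = nquant p"
| "nquant (Conj p q) = nquant p + nquant q"
| "nquant (Disj p q) = nquant p + nquant q"
| "nquant (Imp p q) = nquant p + nquant q"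
| "nquant (Iff p q) = nquant p + nquant q"
| "nquant (Ex x p) = Suc (nquant p)"
| "nquant (All x p) = Suc (nquant p)"

text \<open>The structure B_w for a string w = w_1...w_n, represented as a bool list of length n
  (True = 1): universe {1..n}, usual order, S = {i. w_i = 1}, min = 1, max = n.
  Position i (1-based) holds w ! (i - 1).\<close>

fun teval :: "bool list \<Rightarrow> (nat \<Rightarrow> nat) \<Rightarrow> sterm \<Rightarrow> nat" where
  "teval w a (V x) = a x"
| "teval w a MinC = 1"
| "teval w a MaxC = length w"

fun holds :: "bool list \<Rightarrow> (nat \<Rightarrow> nat) \<Rightarrow> sfm \<Rightarrow> bool" where
  "holds w a FTrue = True"
| "holds w a FFalse = False"
| "holds w a (Eq s t) = (teval w a s = teval w a t)"
| "holds w a (Less s t) = (teval w a s < teval w a t)"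
| "holds w a (Sat t) = (let i = teval w a t in 1 \<le> i \<and> i \<le> length w \<and> w ! (i - 1))"
| "holds w a (Neg p) = (\<not> holds w a p)"
| "holds w a (Conj p q) = (holds w a p \<and> holds w a q)"
| "holds w a (Disj p q) = (holds w a p \<or> holds w a q)"
| "holds w a (Imp p q) = (holds w a p \<longrightarrow> holds w a q)"
| "holds w a (Iff p q) = (holds w a p \<longleftrightarrow> holds w a q)"
| "holds w a (Ex x p) = (\<exists>i\<in>{1..length w}. holds w (a(x := i)) p)"
| "holds w a (All x p) = (\<forall>i\<in>{1..length w}. holds w (a(x := i)) p)"

text \<open>Truth of a formula in B_w (for sentences the assignment is irrelevant; we use
  the constant assignment to min = 1, an element of the universe since n \<ge> 1).\<close>
definition models :: "bool list \<Rightarrow> sfm \<Rightarrow> bool" where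
  "models w p \<longleftrightarrow> holds w (\<lambda>_. 1) p"

end

theory Submission
  imports Defs "HOL-Real_Asymp.Real_Asymp"
begin

fun allvars :: "sfm \<Rightarrow> nat set" where
  "allvars FTrue = {}"
| "allvars FFalse = {}"
| "allvars (Eq s t) = tvars s \<union> tvars t"
| "allvars (Less s t) = tvars s \<union> tvars t"
| "allvars (Sat t) = tvars t"
| "allvars (Neg p) = allvars p"
| "allvars (Conj p q) = allvars p \<union> allvars q"
| "allvars (Disj p q) = allvars p \<union> allvars q"
| "allvars (Imp p q) = allvars p \<union> allvars q"
| "allvars (Iff p q) = allvars p \<union> allvars q"
| "allvars (Ex x p) = insert x (allvars p)"
| "allvars (All x p) = insert x (allvars p)"

fun bvars :: "sfm \<Rightarrow> nat set" where
  "bvars (Neg p) = bvars p"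
| "bvars (Conj p q) = bvars p \<union> bvars q"
| "bvars (Disj p q) = bvars p \<union> bvars q"
| "bvars (Imp p q) = bvars p \<union> bvars q"
| "bvars (Iff p q) = bvars p \<union> bvars q"
| "bvars (Ex x p) = insert x (bvars p)"
| "bvars (All x p) = insert x (bvars p)"
| "bvars _ = {}"

lemma finite_tvars: "finite (tvars t)" by (cases t) auto

lemma finite_allvars: "finite (allvars p)"
  by (induction p) (auto simp: finite_tvars)

lemma finite_bvars: "finite (bvars p)"
  by (induction p) auto

lemma allvars_sub: "allvars p \<subseteq> freevars p \<union> bvars p"
  by (induction p) auto

lemma card_bvars: "card (bvars p) \<le> nquant p"
proof (induction p)
  case (Conj p q) then show ?case using card_Un_le[of "bvars p" "bvars q"] by simp
next
  case (Disj p q) then show ?case using card_Un_le[of "bvars p" "bvars q"] by simp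
next
  case (Imp p q) then show ?case using card_Un_le[of "bvars p" "bvars q"] by simp
next
  case (Iff p q) then show ?case using card_Un_le[of "bvars p" "bvars q"] by simp
next
  case (Ex x p) then show ?case
    by (simp add: card_insert_if finite_bvars)
next
  case (All x p) then show ?case
    by (simp add: card_insert_if finite_bvars)
qed auto

lemma teval_agree: "\<forall>x\<in>tvars t. a x = b x \<Longrightarrow> teval w a t = teval w b t"
  by (cases t) auto

lemma holds_agree: "\<forall>x\<in>allvars p. a x = b x \<Longrightarrow> holds w a p = holds w b p"
proof (induction p arbitrary: a b)
  case (Eq s t) then show ?case using teval_agree[of s a b w] teval_agree[of t a b w] by simp
next
  case (Less s t) then show ?case using teval_agree[of s a b w] teval_agree[of t a b w] by simp
next
  case (Sat t) then show ?case using teval_agree[of t a b w] by simp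
next
  case (Ex x p)
  have "\<And>i. holds w (a(x:=i)) p = holds w (b(x:=i)) p"
    using Ex.prems by (intro Ex.IH) auto
  then show ?case by simp
next
  case (All x p)
  have "\<And>i. holds w (a(x:=i)) p = holds w (b(x:=i)) p"
    using All.prems by (intro All.IH) auto
  then show ?case by simp
next
  case (Neg p) then show ?case by simp
next
  case (Conj p1 p2)
  have "holds w a p1 = holds w b p1" "holds w a p2 = holds w b p2"
    using Conj.prems by (intro Conj.IH; auto)+
  then show ?case by simp
next
  case (Disj p1 p2)
  have "holds w a p1 = holds w b p1" "holds w a p2 = holds w b p2"
    using Disj.prems by (intro Disj.IH; auto)+
  then show ?case by simp
next
  case (Imp p1 p2)
  have "holds w a p1 = holds w b p1" "holds w a p2 = holds w b p2"
    using Imp.prems by (intro Imp.IH; auto)+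
  then show ?case by simp
next
  case (Iff p1 p2)
  have "holds w a p1 = holds w b p1" "holds w a p2 = holds w b p2"
    using Iff.prems by (intro Iff.IH; auto)+
  then show ?case by simp
qed auto

fun tren :: "(nat \<Rightarrow> nat) \<Rightarrow> sterm \<Rightarrow> sterm" where
  "tren f (V x) = V (f x)" | "tren f MinC = MinC" | "tren f MaxC = MaxC"

fun ren :: "(nat \<Rightarrow> nat) \<Rightarrow> sfm \<Rightarrow> sfm" where
  "ren f FTrue = FTrue"
| "ren f FFalse = FFalse"
| "ren f (Eq s t) = Eq (tren f s) (tren f t)"
| "ren f (Less s t) = Less (tren f s) (tren f t)"
| "ren f (Sat t) = Sat (tren f t)"
| "ren f (Neg p) = Neg (ren f p)"
| "ren f (Conj p q) = Conj (ren f p) (ren f q)"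
| "ren f (Disj p q) = Disj (ren f p) (ren f q)"
| "ren f (Imp p q) = Imp (ren f p) (ren f q)"
| "ren f (Iff p q) = Iff (ren f p) (ren f q)"
| "ren f (Ex x p) = Ex (f x) (ren f p)"
| "ren f (All x p) = All (f x) (ren f p)"

lemma tvars_tren: "tvars (tren f t) = f ` tvars t" by (cases t) auto
lemma allvars_ren: "allvars (ren f p) = f ` allvars p"
  by (induction p) (auto simp: tvars_tren)
lemma nquant_ren: "nquant (ren f p) = nquant p"
  by (induction p) auto
lemma teval_tren: "teval w a (tren f t) = teval w (a \<circ> f) t" by (cases t) auto

lemma holds_ren: "inj_on f (allvars p) \<Longrightarrow> holds w a (ren f p) = holds w (a \<circ> f) p"
proof (induction p arbitrary: a)
  case (Ex x p)
  have "\<And>i. holds w (a(f x:=i)) (ren f p) = holds w ((a \<circ> f)(x:=i)) p"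
  proof -
    fix i
    have "holds w (a(f x:=i)) (ren f p) = holds w ((a(f x:=i)) \<circ> f) p"
      using Ex by (intro Ex.IH) (auto intro: inj_on_subset)
    also have "\<dots> = holds w ((a \<circ> f)(x:=i)) p"
      using Ex.prems by (intro holds_agree) (auto simp: inj_on_def)
    finally show "holds w (a(f x:=i)) (ren f p) = holds w ((a \<circ> f)(x:=i)) p" .
  qed
  then show ?case by (simp add: o_def)
next
  case (All x p)
  have "\<And>i. holds w (a(f x:=i)) (ren f p) = holds w ((a \<circ> f)(x:=i)) p"
  proof -
    fix i
    have "holds w (a(f x:=i)) (ren f p) = holds w ((a(f x:=i)) \<circ> f) p"
      using All by (intro All.IH) (auto intro: inj_on_subset)
    also have "\<dots> = holds w ((a \<circ> f)(x:=i)) p"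
      using All.prems by (intro holds_agree) (auto simp: inj_on_def)
    finally show "holds w (a(f x:=i)) (ren f p) = holds w ((a \<circ> f)(x:=i)) p" .
  qed
  then show ?case by (simp add: o_def)
qed (auto simp: teval_tren inj_on_Un)

definition asg :: "nat list \<Rightarrow> nat \<Rightarrow> nat" where
  "asg vs = (\<lambda>x. if x < length vs then vs ! x else 1)"

definition Dom :: "nat \<Rightarrow> nat \<Rightarrow> (bool list \<times> nat list) set" where
  "Dom n k = {p. length (fst p) = n \<and> length (snd p) = k}"

definition mng :: "nat \<Rightarrow> nat \<Rightarrow> sfm \<Rightarrow> bool list \<times> nat list \<Rightarrow> bool" where
  "mng n k \<phi> = (\<lambda>p. p \<in> Dom n k \<and> holds (fst p) (asg (snd p)) \<phi>)"

definition vals :: "bool list \<Rightarrow> nat list \<Rightarrow> nat list" where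
  "vals w vs = 1 # length w # vs"

definition rk :: "nat list \<Rightarrow> nat \<Rightarrow> nat" where
  "rk xs v = card {u \<in> set xs. u < v}"

definition tau :: "bool list \<times> nat list \<Rightarrow> nat list \<times> bool list" where
  "tau p = (map (rk (vals (fst p) (snd p))) (vals (fst p) (snd p)),
            map (\<lambda>v. 1 \<le> v \<and> v \<le> length (fst p) \<and> fst p ! (v - 1)) (vals (fst p) (snd p)))"

definition Phi :: "nat \<Rightarrow> nat \<Rightarrow> (nat list \<times> bool list \<Rightarrow> bool list \<Rightarrow> bool)
     \<Rightarrow> (bool list \<times> nat list \<Rightarrow> bool) list \<Rightarrow> bool list \<times> nat list \<Rightarrow> bool" where
  "Phi n k g cs = (\<lambda>p. p \<in> Dom n k \<and> g (tau p) (map (\<lambda>c. c p) cs))"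

fun isQ :: "sfm \<Rightarrow> bool" where
  "isQ (Ex x p) = True" | "isQ (All x p) = True" | "isQ _ = False"

definition good :: "nat \<Rightarrow> sfm \<Rightarrow> bool" where
  "good k \<phi> \<longleftrightarrow> allvars \<phi> \<subseteq> {..<k}"

fun tidx :: "sterm \<Rightarrow> nat" where
  "tidx MinC = 0" | "tidx MaxC = 1" | "tidx (V x) = x + 2"

lemma rk_less:
  assumes "u \<in> set xs" "v \<in> set xs"
  shows "(u < v) = (rk xs u < rk xs v)"
proof
  assume "u < v"
  have "{z \<in> set xs. z < u} \<subset> {z \<in> set xs. z < v}" using assms \<open>u < v\<close> by auto
  then show "rk xs u < rk xs v" unfolding rk_def by (intro psubset_card_mono) auto
next
  assume h: "rk xs u < rk xs v"
  show "u < v"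
  proof (rule ccontr)
    assume "\<not> u < v"
    then have "{z \<in> set xs. z < v} \<subseteq> {z \<in> set xs. z < u}" by auto
    then have "rk xs v \<le> rk xs u" unfolding rk_def by (intro card_mono) auto
    with h show False by simp
  qed
qed

lemma rk_eq:
  assumes "u \<in> set xs" "v \<in> set xs"
  shows "(u = v) = (rk xs u = rk xs v)"
  using rk_less[OF assms] rk_less[OF assms(2,1)] by (metis less_irrefl linorder_neqE_nat)

lemma teval_vals:
  assumes "tvars t \<subseteq> {..<length vs}"
  shows "teval w (asg vs) t = vals w vs ! tidx t" "tidx t < length (vals w vs)"
  using assms by (cases t; auto simp: asg_def vals_def)+

lemma tau_fst: "i < length (vals (fst p) (snd p)) \<Longrightarrow>
   fst (tau p) ! i = rk (vals (fst p) (snd p)) (vals (fst p) (snd p) ! i)"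
  by (simp add: tau_def Let_def)

lemma tau_snd: "i < length (vals (fst p) (snd p)) \<Longrightarrow>
   snd (tau p) ! i = (let v = vals (fst p) (snd p) ! i in 1 \<le> v \<and> v \<le> length (fst p) \<and> fst p ! (v - 1))"
  by (simp add: tau_def Let_def)

lemma asg_upd: "x < length vs \<Longrightarrow> (asg vs)(x := i) = asg (vs[x := i])"
  by (auto simp: asg_def fun_eq_iff nth_list_update)

lemma bin_case:
  assumes "mng n k p = Phi n k g1 cs1" "mng n k q = Phi n k g2 cs2"
    and "\<And>x. mng n k \<phi> x = (x \<in> Dom n k \<and> f (mng n k p x) (mng n k q x))"
  shows "mng n k \<phi> = Phi n k (\<lambda>ty bs. f (g1 ty (take (length cs1) bs)) (g2 ty (drop (length cs1) bs))) (cs1 @ cs2)"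
proof
  fix x
  show "mng n k \<phi> x = Phi n k (\<lambda>ty bs. f (g1 ty (take (length cs1) bs)) (g2 ty (drop (length cs1) bs))) (cs1 @ cs2) x"
  proof (cases "x \<in> Dom n k")
    case True
    then show ?thesis using assms(3)[of x] fun_cong[OF assms(1), of x] fun_cong[OF assms(2), of x]
      by (simp add: Phi_def take_map drop_map)
  qed (simp add: assms(3) Phi_def)
qed

lemma fm_structure:
  assumes "good k \<phi>"
  shows "\<exists>g \<psi>s. (\<forall>\<psi>\<in>set \<psi>s. isQ \<psi> \<and> good k \<psi>) \<and> sum_list (map nquant \<psi>s) = nquant \<phi>
            \<and> mng n k \<phi> = Phi n k g (map (mng n k) \<psi>s)"
  using assms
proof (induction \<phi>)
  case FTrue
  show ?case by (rule exI[of _ "\<lambda>_ _. True"], rule exI[of _ "[]"]) (auto simp: mng_def Phi_def)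
next
  case FFalse
  show ?case by (rule exI[of _ "\<lambda>_ _. False"], rule exI[of _ "[]"]) (auto simp: mng_def Phi_def)
next
  case (Eq s t)
  show ?case
  proof (rule exI[of _ "\<lambda>ty _. fst ty ! tidx s = fst ty ! tidx t"], rule exI[of _ "[]"], intro conjI)
    show "mng n k (Eq s t) = Phi n k (\<lambda>ty _. fst ty ! tidx s = fst ty ! tidx t) (map (mng n k) [])"
    proof
      fix p
      show "mng n k (Eq s t) p = Phi n k (\<lambda>ty _. fst ty ! tidx s = fst ty ! tidx t) (map (mng n k) []) p"
      proof (cases "p \<in> Dom n k")
        case True
        then have tv: "tvars s \<subseteq> {..<length (snd p)}" "tvars t \<subseteq> {..<length (snd p)}"
          using Eq by (auto simp: good_def Dom_def)
        show ?thesis using True teval_vals[OF tv(1)] teval_vals[OF tv(2)]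
          by (simp add: mng_def Phi_def tau_fst rk_eq[OF nth_mem nth_mem])
      qed (simp add: mng_def Phi_def)
    qed
  qed auto
next
  case (Less s t)
  show ?case
  proof (rule exI[of _ "\<lambda>ty _. fst ty ! tidx s < fst ty ! tidx t"], rule exI[of _ "[]"], intro conjI)
    show "mng n k (Less s t) = Phi n k (\<lambda>ty _. fst ty ! tidx s < fst ty ! tidx t) (map (mng n k) [])"
    proof
      fix p
      show "mng n k (Less s t) p = Phi n k (\<lambda>ty _. fst ty ! tidx s < fst ty ! tidx t) (map (mng n k) []) p"
      proof (cases "p \<in> Dom n k")
        case True
        then have tv: "tvars s \<subseteq> {..<length (snd p)}" "tvars t \<subseteq> {..<length (snd p)}"
          using Less by (auto simp: good_def Dom_def)
        show ?thesis using True teval_vals[OF tv(1)] teval_vals[OF tv(2)]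
          by (simp add: mng_def Phi_def tau_fst rk_less[OF nth_mem nth_mem])
      qed (simp add: mng_def Phi_def)
    qed
  qed auto
next
  case (Sat t)
  show ?case
  proof (rule exI[of _ "\<lambda>ty _. snd ty ! tidx t"], rule exI[of _ "[]"], intro conjI)
    show "mng n k (Sat t) = Phi n k (\<lambda>ty _. snd ty ! tidx t) (map (mng n k) [])"
    proof
      fix p
      show "mng n k (Sat t) p = Phi n k (\<lambda>ty _. snd ty ! tidx t) (map (mng n k) []) p"
      proof (cases "p \<in> Dom n k")
        case True
        then have tv: "tvars t \<subseteq> {..<length (snd p)}"
          using Sat by (auto simp: good_def Dom_def)
        show ?thesis using True teval_vals[OF tv]
          by (simp add: mng_def Phi_def tau_snd Let_def)
      qed (simp add: mng_def Phi_def)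
    qed
  qed auto
next
  case (Neg p)
  then obtain g \<psi>s where h: "\<forall>\<psi>\<in>set \<psi>s. isQ \<psi> \<and> good k \<psi>" "sum_list (map nquant \<psi>s) = nquant p"
     "mng n k p = Phi n k g (map (mng n k) \<psi>s)" by (auto simp: good_def)
  show ?case
  proof (rule exI[of _ "\<lambda>ty bs. \<not> g ty bs"], rule exI[of _ \<psi>s], intro conjI)
    show "mng n k (Neg p) = Phi n k (\<lambda>ty bs. \<not> g ty bs) (map (mng n k) \<psi>s)"
      using h(3) unfolding fun_eq_iff mng_def Phi_def by (simp only: holds.simps) blast
  qed (use h in auto)
next
  case (Conj p q)
  then obtain g1 \<psi>s1 g2 \<psi>s2 where
     h1: "\<forall>\<psi>\<in>set \<psi>s1. isQ \<psi> \<and> good k \<psi>" "sum_list (map nquant \<psi>s1) = nquant p"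
     "mng n k p = Phi n k g1 (map (mng n k) \<psi>s1)" and
     h2: "\<forall>\<psi>\<in>set \<psi>s2. isQ \<psi> \<and> good k \<psi>" "sum_list (map nquant \<psi>s2) = nquant q"
     "mng n k q = Phi n k g2 (map (mng n k) \<psi>s2)" by (auto simp: good_def)
  let ?l = "length \<psi>s1"
  show ?case
  proof (rule exI[of _ "\<lambda>ty bs. g1 ty (take ?l bs) \<and> g2 ty (drop ?l bs)"], rule exI[of _ "\<psi>s1 @ \<psi>s2"], intro conjI)
    show "mng n k (Conj p q) = Phi n k (\<lambda>ty bs. g1 ty (take ?l bs) \<and> g2 ty (drop ?l bs)) (map (mng n k) (\<psi>s1 @ \<psi>s2))"
    proof -
      have "mng n k (Conj p q) = Phi n k (\<lambda>ty bs. g1 ty (take (length (map (mng n k) \<psi>s1)) bs) \<and> g2 ty (drop (length (map (mng n k) \<psi>s1)) bs)) (map (mng n k) \<psi>s1 @ map (mng n k) \<psi>s2)"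
        by (rule bin_case[OF h1(3) h2(3)]) (auto simp: mng_def)
      then show ?thesis by simp
    qed
  qed (use h1 h2 in auto)
next
  case (Disj p q)
  then obtain g1 \<psi>s1 g2 \<psi>s2 where
     h1: "\<forall>\<psi>\<in>set \<psi>s1. isQ \<psi> \<and> good k \<psi>" "sum_list (map nquant \<psi>s1) = nquant p"
     "mng n k p = Phi n k g1 (map (mng n k) \<psi>s1)" and
     h2: "\<forall>\<psi>\<in>set \<psi>s2. isQ \<psi> \<and> good k \<psi>" "sum_list (map nquant \<psi>s2) = nquant q"
     "mng n k q = Phi n k g2 (map (mng n k) \<psi>s2)" by (auto simp: good_def)
  let ?l = "length \<psi>s1"
  show ?case
  proof (rule exI[of _ "\<lambda>ty bs. g1 ty (take ?l bs) \<or> g2 ty (drop ?l bs)"], rule exI[of _ "\<psi>s1 @ \<psi>s2"], intro conjI)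
    show "mng n k (Disj p q) = Phi n k (\<lambda>ty bs. g1 ty (take ?l bs) \<or> g2 ty (drop ?l bs)) (map (mng n k) (\<psi>s1 @ \<psi>s2))"
    proof -
      have "mng n k (Disj p q) = Phi n k (\<lambda>ty bs. g1 ty (take (length (map (mng n k) \<psi>s1)) bs) \<or> g2 ty (drop (length (map (mng n k) \<psi>s1)) bs)) (map (mng n k) \<psi>s1 @ map (mng n k) \<psi>s2)"
        by (rule bin_case[OF h1(3) h2(3)]) (auto simp: mng_def)
      then show ?thesis by simp
    qed
  qed (use h1 h2 in auto)
next
  case (Imp p q)
  then obtain g1 \<psi>s1 g2 \<psi>s2 where
     h1: "\<forall>\<psi>\<in>set \<psi>s1. isQ \<psi> \<and> good k \<psi>" "sum_list (map nquant \<psi>s1) = nquant p"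
     "mng n k p = Phi n k g1 (map (mng n k) \<psi>s1)" and
     h2: "\<forall>\<psi>\<in>set \<psi>s2. isQ \<psi> \<and> good k \<psi>" "sum_list (map nquant \<psi>s2) = nquant q"
     "mng n k q = Phi n k g2 (map (mng n k) \<psi>s2)" by (auto simp: good_def)
  let ?l = "length \<psi>s1"
  show ?case
  proof (rule exI[of _ "\<lambda>ty bs. g1 ty (take ?l bs) \<longrightarrow> g2 ty (drop ?l bs)"], rule exI[of _ "\<psi>s1 @ \<psi>s2"], intro conjI)
    show "mng n k (Imp p q) = Phi n k (\<lambda>ty bs. g1 ty (take ?l bs) \<longrightarrow> g2 ty (drop ?l bs)) (map (mng n k) (\<psi>s1 @ \<psi>s2))"
    proof -
      have "mng n k (Imp p q) = Phi n k (\<lambda>ty bs. g1 ty (take (length (map (mng n k) \<psi>s1)) bs) \<longrightarrow> g2 ty (drop (length (map (mng n k) \<psi>s1)) bs)) (map (mng n k) \<psi>s1 @ map (mng n k) \<psi>s2)"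
        by (rule bin_case[OF h1(3) h2(3)]) (auto simp: mng_def)
      then show ?thesis by simp
    qed
  qed (use h1 h2 in auto)
next
  case (Iff p q)
  then obtain g1 \<psi>s1 g2 \<psi>s2 where
     h1: "\<forall>\<psi>\<in>set \<psi>s1. isQ \<psi> \<and> good k \<psi>" "sum_list (map nquant \<psi>s1) = nquant p"
     "mng n k p = Phi n k g1 (map (mng n k) \<psi>s1)" and
     h2: "\<forall>\<psi>\<in>set \<psi>s2. isQ \<psi> \<and> good k \<psi>" "sum_list (map nquant \<psi>s2) = nquant q"
     "mng n k q = Phi n k g2 (map (mng n k) \<psi>s2)" by (auto simp: good_def)
  let ?l = "length \<psi>s1"
  show ?case
  proof (rule exI[of _ "\<lambda>ty bs. g1 ty (take ?l bs) = g2 ty (drop ?l bs)"], rule exI[of _ "\<psi>s1 @ \<psi>s2"], intro conjI)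
    show "mng n k (Iff p q) = Phi n k (\<lambda>ty bs. g1 ty (take ?l bs) = g2 ty (drop ?l bs)) (map (mng n k) (\<psi>s1 @ \<psi>s2))"
    proof -
      have "mng n k (Iff p q) = Phi n k (\<lambda>ty bs. g1 ty (take (length (map (mng n k) \<psi>s1)) bs) = g2 ty (drop (length (map (mng n k) \<psi>s1)) bs)) (map (mng n k) \<psi>s1 @ map (mng n k) \<psi>s2)"
        by (rule bin_case[OF h1(3) h2(3)]) (auto simp: mng_def)
      then show ?thesis by simp
    qed
  qed (use h1 h2 in auto)
next
  case (Ex x p)
  show ?case
    by (rule exI[of _ "\<lambda>ty bs. bs ! 0"], rule exI[of _ "[Ex x p]"])
      (use Ex.prems in \<open>auto simp: fun_eq_iff mng_def Phi_def\<close>)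
next
  case (All x p)
  show ?case
    by (rule exI[of _ "\<lambda>ty bs. bs ! 0"], rule exI[of _ "[All x p]"])
      (use All.prems in \<open>auto simp: fun_eq_iff mng_def Phi_def\<close>)
qed

definition Types :: "nat \<Rightarrow> (nat list \<times> bool list) set" where
  "Types k = {(r, b). set r \<subseteq> {..<k+2} \<and> length r = k+2 \<and> length b = k+2}"

definition SS :: "nat \<Rightarrow> ((nat list \<times> bool list) \<times> bool list) set" where
  "SS k = Types k \<times> {bs. length bs \<le> k}"

definition GG :: "nat \<Rightarrow> (nat list \<times> bool list \<Rightarrow> bool list \<Rightarrow> bool) set" where
  "GG k = {g. \<forall>ty bs. (ty, bs) \<notin> SS k \<longrightarrow> \<not> g ty bs}"

definition Eset where "Eset n k j = {mng n k \<phi> | \<phi>. good k \<phi> \<and> nquant \<phi> \<le> j}"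
definition Fset where "Fset n k j = {map (mng n k) \<psi>s | \<psi>s. (\<forall>\<psi>\<in>set \<psi>s. isQ \<psi> \<and> good k \<psi>)
     \<and> sum_list (map nquant \<psi>s) \<le> j}"
definition Qset where "Qset n k i = {mng n k \<phi> | \<phi>. isQ \<phi> \<and> good k \<phi> \<and> nquant \<phi> = i}"

definition proj :: "nat \<Rightarrow> nat \<Rightarrow> bool \<Rightarrow> nat \<Rightarrow> (bool list \<times> nat list \<Rightarrow> bool) \<Rightarrow> bool list \<times> nat list \<Rightarrow> bool" where
  "proj n k b x e = (\<lambda>p. p \<in> Dom n k \<and> (if b then (\<exists>i\<in>{1..n}. e (fst p, (snd p)[x:=i]))
                                           else (\<forall>i\<in>{1..n}. e (fst p, (snd p)[x:=i]))))"

lemma rk_bound: "v \<in> set xs \<Longrightarrow> rk xs v < length xs"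
proof -
  assume v: "v \<in> set xs"
  have "{u \<in> set xs. u < v} \<subseteq> set xs - {v}" by auto
  then have "rk xs v \<le> card (set xs - {v})" unfolding rk_def by (intro card_mono) auto
  also have "\<dots> = card (set xs) - 1" using v by simp
  also have "\<dots> < length xs" using v card_length[of xs]
    by (metis One_nat_def card_gt_0_iff diff_less finite_set empty_iff le_less_trans less_one not_le)
  finally show ?thesis .
qed

lemma tau_Types: "p \<in> Dom n k \<Longrightarrow> tau p \<in> Types k"
proof -
  assume p: "p \<in> Dom n k"
  let ?xs = "vals (fst p) (snd p)"
  have l: "length ?xs = k + 2" using p by (simp add: vals_def Dom_def)
  have "\<forall>v\<in>set ?xs. rk ?xs v < k + 2" using rk_bound[of _ ?xs] l by auto
  then show ?thesis using l by (auto simp: tau_def Types_def)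
qed

lemma Phi_restrict:
  assumes "length cs \<le> k"
  shows "Phi n k g cs = Phi n k (\<lambda>ty bs. (ty, bs) \<in> SS k \<and> g ty bs) cs"
    "(\<lambda>ty bs. (ty, bs) \<in> SS k \<and> g ty bs) \<in> GG k"
  using assms tau_Types by (auto simp: Phi_def SS_def GG_def fun_eq_iff)

lemma nquant_isQ: "isQ \<psi> \<Longrightarrow> 1 \<le> nquant \<psi>"
  by (cases \<psi>) auto

lemma length_le_sum: "\<forall>\<psi>\<in>set \<psi>s. isQ \<psi> \<Longrightarrow> length \<psi>s \<le> sum_list (map nquant \<psi>s)"
  by (induction \<psi>s) (auto dest: nquant_isQ)

lemma E_sub: "j \<le> k \<Longrightarrow> Eset n k j \<subseteq> (\<lambda>(g, cs). Phi n k g cs) ` (GG k \<times> Fset n k j)"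
proof
  fix e assume j: "j \<le> k" and "e \<in> Eset n k j"
  then obtain \<phi> where \<phi>: "good k \<phi>" "nquant \<phi> \<le> j" "e = mng n k \<phi>" by (auto simp: Eset_def)
  obtain g \<psi>s where h: "\<forall>\<psi>\<in>set \<psi>s. isQ \<psi> \<and> good k \<psi>" "sum_list (map nquant \<psi>s) = nquant \<phi>"
     "mng n k \<phi> = Phi n k g (map (mng n k) \<psi>s)" using fm_structure[OF \<phi>(1)] by blast
  have len: "length (map (mng n k) \<psi>s) \<le> k" using length_le_sum[of \<psi>s] h \<phi> j by auto
  have "map (mng n k) \<psi>s \<in> Fset n k j" using h \<phi> by (auto simp: Fset_def)
  then show "e \<in> (\<lambda>(g, cs). Phi n k g cs) ` (GG k \<times> Fset n k j)"
    using Phi_restrict(1)[OF len, of n g] Phi_restrict(2)[OF len, of g] h(3) \<phi>(3) by (auto intro!: image_eqI)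
qed

lemma Q_sub: "1 \<le> i \<Longrightarrow> Qset n k i \<subseteq> (\<lambda>(b, x, e). proj n k b x e) ` (UNIV \<times> {..<k} \<times> Eset n k (i - 1))"
proof
  fix c assume i: "1 \<le> i" and "c \<in> Qset n k i"
  then obtain \<phi> where \<phi>: "isQ \<phi>" "good k \<phi>" "nquant \<phi> = i" "c = mng n k \<phi>" by (auto simp: Qset_def)
  show "c \<in> (\<lambda>(b, x, e). proj n k b x e) ` (UNIV \<times> {..<k} \<times> Eset n k (i - 1))"
  proof (cases \<phi>)
    case (Ex x \<psi>)
    have x: "x < k" and g: "good k \<psi>" using \<phi> Ex by (auto simp: good_def)
    have "c = proj n k True x (mng n k \<psi>)"
      using x by (auto simp: \<phi>(4) Ex fun_eq_iff proj_def mng_def Dom_def asg_upd)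
    moreover have "mng n k \<psi> \<in> Eset n k (i - 1)" using g \<phi> Ex by (auto simp: Eset_def)
    ultimately show ?thesis using x by force
  next
    case (All x \<psi>)
    have x: "x < k" and g: "good k \<psi>" using \<phi> All by (auto simp: good_def)
    have "c = proj n k False x (mng n k \<psi>)"
      using x by (auto simp: \<phi>(4) All fun_eq_iff proj_def mng_def Dom_def asg_upd)
    moreover have "mng n k \<psi> \<in> Eset n k (i - 1)" using g \<phi> All by (auto simp: Eset_def)
    ultimately show ?thesis using x by force
  qed (use \<phi> in auto)
qed

lemma F_sub: "Fset n k j \<subseteq> {[]} \<union> (\<Union>i\<in>{1..j}. (\<lambda>(c, cs). c # cs) ` (Qset n k i \<times> Fset n k (j - i)))"
proof
  fix cs assume "cs \<in> Fset n k j"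
  then obtain \<psi>s where h: "\<forall>\<psi>\<in>set \<psi>s. isQ \<psi> \<and> good k \<psi>" "sum_list (map nquant \<psi>s) \<le> j"
     "cs = map (mng n k) \<psi>s" by (auto simp: Fset_def)
  show "cs \<in> {[]} \<union> (\<Union>i\<in>{1..j}. (\<lambda>(c, cs). c # cs) ` (Qset n k i \<times> Fset n k (j - i)))"
  proof (cases \<psi>s)
    case Nil then show ?thesis using h by simp
  next
    case (Cons \<psi> rest)
    let ?i = "nquant \<psi>"
    have i: "?i \<in> {1..j}" using h Cons nquant_isQ[of \<psi>] by auto
    have "mng n k \<psi> \<in> Qset n k ?i" using h Cons by (auto simp: Qset_def)
    moreover have "map (mng n k) rest \<in> Fset n k (j - ?i)" using h Cons by (auto simp: Fset_def)
    ultimately have "mng n k \<psi> # map (mng n k) rest \<in> (\<lambda>(c, cs). c # cs) ` (Qset n k ?i \<times> Fset n k (j - ?i))"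
      by (intro image_eqI[of _ _ "(mng n k \<psi>, map (mng n k) rest)"]) auto
    then have "cs \<in> (\<Union>i\<in>{1..j}. (\<lambda>(c, cs). c # cs) ` (Qset n k i \<times> Fset n k (j - i)))"
      using i h(3) Cons by (intro UN_I[OF i]) simp
    then show ?thesis by (rule UnI2)
  qed
qed

lemma GG_finite_card: "finite (GG k) \<and> card (GG k) \<le> 2 ^ card (SS k)"
proof -
  have fS: "finite (SS k)"
  proof -
    have "Types k \<subseteq> {r. set r \<subseteq> {..<k+2} \<and> length r = k+2} \<times> {b. set b \<subseteq> UNIV \<and> length b = k+2}"
      by (auto simp: Types_def)
    moreover have "finite {r. set r \<subseteq> {..<k+2} \<and> length r = k+2}"
      by (rule finite_lists_length_eq) auto
    moreover have "finite {b::bool list. set b \<subseteq> UNIV \<and> length b = k+2}"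
      by (rule finite_lists_length_eq) auto
    ultimately have "finite (Types k)" by (meson finite_SigmaI finite_subset)
    moreover have "finite {bs::bool list. length bs \<le> k}"
    proof -
      have "{bs::bool list. length bs \<le> k} = (\<Union>l\<in>{..k}. {bs. set bs \<subseteq> UNIV \<and> length bs = l})" by auto
      moreover have "\<And>l. finite {bs::bool list. set bs \<subseteq> UNIV \<and> length bs = l}"
        by (rule finite_lists_length_eq) auto
      ultimately show ?thesis by auto
    qed
    ultimately show ?thesis by (simp add: SS_def)
  qed
  let ?f = "\<lambda>g. {x \<in> SS k. g (fst x) (snd x)}"
  have inj: "inj_on ?f (GG k)"
  proof (rule inj_onI)
    fix g h assume g: "g \<in> GG k" and h: "h \<in> GG k" and eq: "?f g = ?f h"
    show "g = h"
    proof (intro ext)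
      fix ty bs
      show "g ty bs = h ty bs"
      proof (cases "(ty, bs) \<in> SS k")
        case True then show ?thesis using eq by (metis (no_types, lifting) fst_conv mem_Collect_eq snd_conv)
      next
        case False then show ?thesis using g h unfolding GG_def by blast
      qed
    qed
  qed
  have sub: "?f ` GG k \<subseteq> Pow (SS k)" by auto
  have "finite (GG k)" using inj_on_finite[OF inj sub] fS by simp
  moreover have "card (GG k) \<le> card (Pow (SS k))"
    using card_inj_on_le[OF inj sub] fS by simp
  ultimately show ?thesis using fS by (simp add: card_Pow)
qed

lemma F_card:
  assumes "j \<le> k"
  shows "finite (Fset n k j) \<and> card (Fset n k j) \<le> (k * (2 * k * card (GG k)) + 1) ^ j"
  using assms
proof (induction j rule: less_induct)
  case (less j)
  define A where "A = 2 * k * card (GG k)"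
  define D where "D = k * A + 1"
  have fG: "finite (GG k)" using GG_finite_card by blast
  have QF: "finite (Qset n k i) \<and> card (Qset n k i) \<le> A * D ^ (i - 1)" if i: "i \<in> {1..j}" for i
  proof -
    have IH: "finite (Fset n k (i - 1)) \<and> card (Fset n k (i - 1)) \<le> D ^ (i - 1)"
    proof -
      have "i - 1 < j" "i - 1 \<le> k" using less.prems i by auto
      from less.IH[OF this] show ?thesis unfolding D_def A_def .
    qed
    have fE: "finite ((\<lambda>(g, cs). Phi n k g cs) ` (GG k \<times> Fset n k (i - 1)))" using IH fG by auto
    have cE: "card ((\<lambda>(g, cs). Phi n k g cs) ` (GG k \<times> Fset n k (i - 1))) \<le> card (GG k) * D ^ (i - 1)"
    proof -
      have "card ((\<lambda>(g, cs). Phi n k g cs) ` (GG k \<times> Fset n k (i - 1))) \<le> card (GG k \<times> Fset n k (i - 1))"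
        by (rule card_image_le) (use IH fG in auto)
      also have "\<dots> = card (GG k) * card (Fset n k (i - 1))" by (simp add: card_cartesian_product)
      also have "\<dots> \<le> card (GG k) * D ^ (i - 1)" using IH by (intro mult_le_mono2) auto
      finally show ?thesis .
    qed
    have Esub: "Eset n k (i - 1) \<subseteq> (\<lambda>(g, cs). Phi n k g cs) ` (GG k \<times> Fset n k (i - 1))"
      using E_sub[of "i - 1" k n] less.prems i by (meson atLeastAtMost_iff diff_le_self le_trans)
    have fE2: "finite (Eset n k (i - 1))" using finite_subset[OF Esub fE] .
    have cE2: "card (Eset n k (i - 1)) \<le> card (GG k) * D ^ (i - 1)"
      using card_mono[OF fE Esub] cE by simp
    let ?B = "(UNIV :: bool set) \<times> {..<k} \<times> Eset n k (i - 1)"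
    have fB: "finite ?B" using fE2 by simp
    have cB: "card ?B \<le> 2 * k * (card (GG k) * D ^ (i - 1))"
      using cE2 by (simp add: card_cartesian_product card_UNIV_bool)
    have Qs: "Qset n k i \<subseteq> (\<lambda>(b, x, e). proj n k b x e) ` ?B" using Q_sub[of i n k] i by auto
    have "finite (Qset n k i)" using finite_subset[OF Qs] fB by blast
    moreover have "card (Qset n k i) \<le> card ?B"
      using card_mono[OF finite_imageI[OF fB] Qs] card_image_le[OF fB, of "\<lambda>(b, x, e). proj n k b x e"] by linarith
    ultimately show ?thesis using cB by (simp add: A_def mult.assoc)
  qed
  have FF: "finite (Fset n k (j - i)) \<and> card (Fset n k (j - i)) \<le> D ^ (j - i)" if i: "i \<in> {1..j}" for i
  proof -
    have "j - i < j" "j - i \<le> k" using less.prems i by auto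
    from less.IH[OF this] show ?thesis unfolding D_def A_def .
  qed
  let ?C = "\<lambda>i. (\<lambda>(c, cs). c # cs) ` (Qset n k i \<times> Fset n k (j - i))"
  have fC: "finite (?C i)" if "i \<in> {1..j}" for i using QF[OF that] FF[OF that] by auto
  have cC: "card (?C i) \<le> A * D ^ (j - 1)" if i: "i \<in> {1..j}" for i
  proof -
    have "card (?C i) \<le> card (Qset n k i \<times> Fset n k (j - i))"
      using QF[OF i] FF[OF i] by (intro card_image_le) auto
    also have "\<dots> = card (Qset n k i) * card (Fset n k (j - i))" by (simp add: card_cartesian_product)
    also have "\<dots> \<le> (A * D ^ (i - 1)) * D ^ (j - i)" using QF[OF i] FF[OF i] by (intro mult_le_mono) auto
    also have "\<dots> = A * D ^ (j - 1)"
    proof -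
      have e: "i - 1 + (j - i) = j - 1" using i by auto
      show ?thesis by (simp only: mult.assoc power_add[symmetric] e)
    qed
    finally show ?thesis .
  qed
  have fU: "finite (\<Union>i\<in>{1..j}. ?C i)" using fC by auto
  have cU: "card (\<Union>i\<in>{1..j}. ?C i) \<le> j * (A * D ^ (j - 1))"
  proof -
    have "card (\<Union>i\<in>{1..j}. ?C i) \<le> (\<Sum>i\<in>{1..j}. card (?C i))" by (rule card_UN_le) simp
    also have "\<dots> \<le> (\<Sum>i\<in>{1..j}. A * D ^ (j - 1))" by (intro sum_mono cC)
    finally show ?thesis by simp
  qed
  have fU2: "finite ({[]} \<union> (\<Union>i\<in>{1..j}. ?C i))" using fU by simp
  have fin: "finite (Fset n k j)" using finite_subset[OF F_sub fU2] .
  have c1: "card (Fset n k j) \<le> card ({[]} \<union> (\<Union>i\<in>{1..j}. ?C i))"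
    by (rule card_mono[OF _ F_sub]) (use fU in auto)
  have c2: "card ({[]} \<union> (\<Union>i\<in>{1..j}. ?C i)) \<le> 1 + j * (A * D ^ (j - 1))"
    using card_Un_le[of "{[]}" "\<Union>i\<in>{1..j}. ?C i"] cU by simp
  have c3: "1 + j * (A * D ^ (j - 1)) \<le> D ^ j"
  proof (cases j)
    case 0 then show ?thesis by simp
  next
    case (Suc m)
    have D1: "1 \<le> D ^ m" unfolding D_def by (intro one_le_power) simp
    have jA: "1 + j * A \<le> D" unfolding D_def using mult_le_mono1[OF less.prems, of A] by simp
    have "1 + j * (A * D ^ m) \<le> D ^ m + j * A * D ^ m" using D1 by (simp add: mult.assoc)
    also have "\<dots> = (1 + j * A) * D ^ m" by (simp add: algebra_simps)
    also have "\<dots> \<le> D * D ^ m" using jA by (rule mult_le_mono1)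
    finally show ?thesis using Suc by simp
  qed
  have "card (Fset n k j) \<le> D ^ j" using le_trans[OF c1 le_trans[OF c2 c3]] .
  then have "card (Fset n k j) \<le> (k * (2 * k * card (GG k)) + 1) ^ j" by (simp only: D_def A_def)
  with fin show ?case by (rule conjI)
qed

lemma card_SS: "card (SS k) \<le> (k+2)^(k+2) * 2^(k+2) * ((k+1) * 2^k)"
proof -
  have T: "Types k = {r. set r \<subseteq> {..<k+2} \<and> length r = k+2} \<times> {b::bool list. length b = k+2}"
    by (auto simp: Types_def)
  have c1: "card {r. set r \<subseteq> {..<k+2} \<and> length r = k+2} = (k+2)^(k+2)"
    using card_lists_length_eq[of "{..<k+2}" "k+2"] by simp
  have cl: "\<And>l. card {bs::bool list. length bs = l} = 2^l"
    using card_lists_length_eq[of "UNIV::bool set"] by (simp add: card_UNIV_bool)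
  have cT: "card (Types k) = (k+2)^(k+2) * 2^(k+2)"
    unfolding T card_cartesian_product c1 cl ..
  have B: "{bs::bool list. length bs \<le> k} = (\<Union>l\<in>{..k}. {bs. length bs = l})" by auto
  have "card {bs::bool list. length bs \<le> k} \<le> (\<Sum>l\<in>{..k}. card {bs::bool list. length bs = l})"
    unfolding B by (rule card_UN_le) simp
  also have "\<dots> = (\<Sum>l\<in>{..k}. 2^l)" by (simp add: cl)
  also have "\<dots> \<le> (\<Sum>l\<in>{..k}. (2::nat)^k)" by (intro sum_mono power_increasing) auto
  also have "\<dots> = (k+1) * 2^k" by simp
  finally have cB: "card {bs::bool list. length bs \<le> k} \<le> (k+1) * 2^k" .
  have "card (SS k) = card (Types k) * card {bs::bool list. length bs \<le> k}"
    by (simp add: SS_def card_cartesian_product)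
  also have "\<dots> \<le> (k+2)^(k+2) * 2^(k+2) * ((k+1) * 2^k)"
    unfolding cT using cB by (rule mult_le_mono2)
  finally show ?thesis .
qed

definition sb :: "nat \<Rightarrow> nat" where
  "sb k = (k+2)^(k+2) * 2^(k+2) * ((k+1) * 2^k)"

lemma sb_big: "2 * k^2 + 1 \<le> 2 ^ sb k"
proof -
  have "k < 2^k" by (rule less_exp)
  then have "k^2 \<le> (2^k)^2" by (intro power_mono) auto
  then have "k^2 \<le> 2^(2*k)" by (simp add: power_mult[symmetric] mult.commute)
  moreover have "(1::nat) \<le> 2^(2*k)" by simp
  ultimately have "2 * k^2 + 1 \<le> 4 * 2^(2*k)" by linarith
  also have "\<dots> = 2^(2*k+2)" by (simp add: power_add)
  finally have a: "2 * k^2 + 1 \<le> 2^(2*k+2)" .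
  have e: "2*k+2 = (k+2) + k" by simp
  have "(2::nat)^(2*k+2) = 1 * 2^(k+2) * (1 * 2^k)" by (simp only: e power_add mult_1)
  also have "\<dots> \<le> sb k" unfolding sb_def
    by (intro mult_le_mono mult_le_mono1) (auto simp: Suc_le_eq)
  finally have "2*k+2 < sb k" using less_exp[of "2*k+2"] by linarith
  then have "2^(2*k+2) \<le> (2::nat)^sb k" by (intro power_increasing) auto
  with a show ?thesis by linarith
qed

lemma Eset_bound: "finite (Eset n k k) \<and> card (Eset n k k) \<le> 2 ^ (sb k * (2*k+1))"
proof -
  define s where "s = sb k"
  have cS: "card (SS k) \<le> s" using card_SS by (simp add: s_def sb_def)
  have fG: "finite (GG k)" and cG0: "card (GG k) \<le> 2 ^ card (SS k)" using GG_finite_card by auto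
  have "(2::nat) ^ card (SS k) \<le> 2 ^ s" using cS by (intro power_increasing) auto
  then have cG: "card (GG k) \<le> 2 ^ s" using cG0 by linarith
  have F: "finite (Fset n k k)" "card (Fset n k k) \<le> (k * (2 * k * card (GG k)) + 1) ^ k"
    using F_card[of k k n] by auto
  have D: "k * (2 * k * card (GG k)) + 1 \<le> 2 ^ (2 * s)"
  proof -
    have "k * (2 * k * card (GG k)) + 1 \<le> (2 * k^2) * 2^s + 1"
      using cG by (simp add: power2_eq_square mult.assoc)
    also have "\<dots> \<le> (2 * k^2 + 1) * 2^s" by simp
    also have "\<dots> \<le> 2^s * 2^s" using sb_big[of k] by (intro mult_le_mono1) (simp add: s_def)
    also have "\<dots> = 2 ^ (2 * s)" by (metis mult_2 power_add)
    finally show ?thesis .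
  qed
  have sub: "Eset n k k \<subseteq> (\<lambda>(g, cs). Phi n k g cs) ` (GG k \<times> Fset n k k)" by (rule E_sub) simp
  have fin: "finite (GG k \<times> Fset n k k)" using fG F by simp
  have "card (Eset n k k) \<le> card ((\<lambda>(g, cs). Phi n k g cs) ` (GG k \<times> Fset n k k))"
    by (rule card_mono[OF finite_imageI[OF fin] sub])
  also have "\<dots> \<le> card (GG k \<times> Fset n k k)" by (rule card_image_le[OF fin])
  also have "\<dots> = card (GG k) * card (Fset n k k)" by (simp add: card_cartesian_product)
  also have "\<dots> \<le> 2 ^ s * (2 ^ (2 * s)) ^ k"
    using cG F(2) power_mono[OF D, of k] by (intro mult_le_mono) auto
  also have "\<dots> = 2 ^ (s * (2*k+1))" by (simp add: power_mult[symmetric] power_add[symmetric] algebra_simps)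
  finally show ?thesis using finite_subset[OF sub finite_imageI[OF fin]] by (simp add: s_def)
qed

definition RR :: "real \<Rightarrow> real" where
  "RR y = (y + 2) powr (y + 2) * 2 powr (2 * y + 2) * (y + 1) * (2 * y + 1)"

lemma sb_real: "real Q \<le> y \<Longrightarrow> real (sb Q * (2*Q+1)) \<le> RR y"
proof -
  assume xy: "real Q \<le> y"
  define x where "x = real Q"
  have x0: "0 \<le> x" by (simp add: x_def)
  have a: "real ((Q+2)^(Q+2)) = (x+2) powr (x+2)"
  proof -
    have "(x+2) powr (x+2) = (x+2) powr (real (Q+2))" by (simp only: x_def of_nat_add of_nat_numeral)
    also have "\<dots> = (x+2)^(Q+2)" by (rule powr_realpow) (simp add: x_def)
    also have "\<dots> = real ((Q+2)^(Q+2))" by (simp only: x_def of_nat_add of_nat_numeral of_nat_power)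
    finally show ?thesis by simp
  qed
  have b: "real (2^(Q+2) * 2^Q) = 2 powr (2*x+2)"
  proof -
    have e: "2*Q+2 = (Q+2)+Q" by simp
    have "(2::nat)^(Q+2) * 2^Q = 2^(2*Q+2)" by (simp only: e power_add)
    then have "real (2^(Q+2) * 2^Q) = (2::real)^(2*Q+2)" by (metis of_nat_numeral of_nat_power)
    also have "\<dots> = 2 powr (real (2*Q+2))" by (rule powr_realpow[symmetric]) simp
    also have "real (2*Q+2) = 2*x+2" by (simp add: x_def)
    finally show ?thesis .
  qed
  have "sb Q * (2*Q+1) = (Q+2)^(Q+2) * (2^(Q+2) * 2^Q) * (Q+1) * (2*Q+1)"
    unfolding sb_def by (simp only: ac_simps)
  then have "real (sb Q * (2*Q+1)) = real ((Q+2)^(Q+2)) * real (2^(Q+2) * 2^Q) * (x+1) * (2*x+1)"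
    by (simp only: of_nat_mult x_def of_nat_add of_nat_1 of_nat_numeral)
  also have "\<dots> = (x+2) powr (x+2) * 2 powr (2*x+2) * (x+1) * (2*x+1)" by (simp only: a b)
  also have "\<dots> \<le> RR y" unfolding RR_def
  proof (intro mult_mono)
    have "(x+2) powr (x+2) \<le> (y+2) powr (x+2)" using x0 xy by (intro powr_mono2) (auto simp: x_def)
    also have "\<dots> \<le> (y+2) powr (y+2)" using x0 xy by (intro powr_mono) (auto simp: x_def)
    finally show "(x+2) powr (x+2) \<le> (y+2) powr (y+2)" .
    show "2 powr (2*x+2) \<le> 2 powr (2*y+2)" using xy by (simp add: x_def)
  qed (use x0 xy in \<open>auto simp: x_def\<close>)
  finally show ?thesis .
qed

lemma asym: "\<exists>N::nat. \<forall>n\<ge>N. 2 \<le> n \<and> sb (nat \<lfloor>real n / log 2 (real n)\<rfloor>) * (2 * nat \<lfloor>real n / log 2 (real n)\<rfloor> + 1) < 2^(n-1)"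
proof -
  have ev: "eventually (\<lambda>n::real. RR (n / log 2 n) < 2 powr (n - 1)) at_top"
    unfolding RR_def by real_asymp
  then obtain N0 where N0: "\<And>x. x \<ge> N0 \<Longrightarrow> RR (x / log 2 x) < 2 powr (x - 1)"
    by (auto simp: eventually_at_top_linorder)
  show ?thesis
  proof (intro exI[of _ "max 2 (nat \<lceil>N0\<rceil>)"] allI impI conjI)
    fix n :: nat assume n: "max 2 (nat \<lceil>N0\<rceil>) \<le> n"
    then show "2 \<le> n" by simp
    define y where "y = real n / log 2 (real n)"
    define Q where "Q = nat \<lfloor>y\<rfloor>"
    have ny: "real n \<ge> N0" using n by linarith
    have y0: "0 \<le> y" using n unfolding y_def by (intro divide_nonneg_nonneg) auto
    have Qy: "real Q \<le> y" unfolding Q_def using y0 of_int_floor_le[of y] by simp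
    have "real (sb Q * (2*Q+1)) \<le> RR y" by (rule sb_real[OF Qy])
    also have "\<dots> < 2 powr (real n - 1)" unfolding y_def using N0[OF ny] .
    also have "\<dots> = real (2^(n-1))"
    proof -
      have e: "real n - 1 = real (n - 1)" using n by linarith
      have "(2::real) powr (real (n - 1)) = 2 ^ (n - 1)" by (rule powr_realpow) simp
      then show ?thesis unfolding e by simp
    qed
    finally have "real (sb Q * (2*Q+1)) < real (2^(n-1))" .
    then have "sb Q * (2*Q+1) < 2^(n-1)" by (simp only: of_nat_less_iff)
    then show "sb (nat \<lfloor>real n / log 2 (real n)\<rfloor>) * (2 * nat \<lfloor>real n / log 2 (real n)\<rfloor> + 1) < 2^(n-1)"
      unfolding Q_def y_def .
  qed
qed

lemma asg_rep: "asg (replicate Q 1) = (\<lambda>_. 1)"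
  by (auto simp: asg_def fun_eq_iff)

lemma sentence_lang:
  assumes "sentence \<phi>" "nquant \<phi> \<le> Q"
  shows "\<exists>e\<in>Eset n Q Q. \<forall>w. length w = n \<longrightarrow> (models w \<phi> = e (w, replicate Q 1))"
proof -
  define V where "V = allvars \<phi>"
  have fV: "finite V" by (simp add: V_def finite_allvars)
  have "V \<subseteq> bvars \<phi>" using allvars_sub[of \<phi>] assms(1) by (auto simp: V_def sentence_def)
  then have cV: "card V \<le> Q" using card_mono[OF finite_bvars] card_bvars[of \<phi>] assms(2) by (meson le_trans)
  obtain \<pi> where \<pi>: "bij_betw \<pi> V {..<card V}"
    using bij_betw_iff_card[OF fV, of "{..<card V}"] by auto
  define \<psi> where "\<psi> = ren \<pi> \<phi>"
  have inj: "inj_on \<pi> (allvars \<phi>)" using \<pi> by (simp add: V_def bij_betw_def)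
  have good: "good Q \<psi>" using \<pi> cV
    by (auto simp: good_def \<psi>_def allvars_ren V_def[symmetric] bij_betw_def)
  have "mng n Q \<psi> \<in> Eset n Q Q" using good assms(2) by (auto simp: Eset_def \<psi>_def nquant_ren)
  moreover have "\<forall>w. length w = n \<longrightarrow> (models w \<phi> = mng n Q \<psi> (w, replicate Q 1))"
  proof (intro allI impI)
    fix w :: "bool list" assume w: "length w = n"
    have "mng n Q \<psi> (w, replicate Q 1) = holds w (asg (replicate Q 1)) \<psi>"
      using w by (simp add: mng_def Dom_def)
    also have "\<dots> = holds w (\<lambda>_. 1) \<psi>" by (simp only: asg_rep)
    also have "\<dots> = holds w ((\<lambda>_. 1) \<circ> \<pi>) \<phi>" unfolding \<psi>_def by (rule holds_ren[OF inj])
    also have "\<dots> = models w \<phi>" by (simp add: models_def o_def)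
    finally show "models w \<phi> = mng n Q \<psi> (w, replicate Q 1)" by simp
  qed
  ultimately show ?thesis by blast
qed

theorem mainTheorem20:
  "\<exists>N::nat. \<forall>n\<ge>N. \<exists>A::bool list set.
     A \<noteq> {} \<and> A \<subset> {w. length w = n} \<and>
     (\<forall>\<phi>. sentence \<phi> \<and> (\<forall>w\<in>A. models w \<phi>)
          \<and> (\<forall>w'. length w' = n \<and> w' \<notin> A \<longrightarrow> \<not> models w' \<phi>)
        \<longrightarrow> real (nquant \<phi>) \<ge> real n / log 2 (real n))"
proof -
  obtain N where N: "\<And>n. n \<ge> N \<Longrightarrow> 2 \<le> n \<and> sb (nat \<lfloor>real n / log 2 (real n)\<rfloor>) * (2 * nat \<lfloor>real n / log 2 (real n)\<rfloor> + 1) < 2^(n-1)"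
    using asym by blast
  show ?thesis
  proof (intro exI[of _ N] allI impI)
    fix n assume nN: "N \<le> n"
    define y where "y = real n / log 2 (real n)"
    define Q where "Q = nat \<lfloor>y\<rfloor>"
    have nP: "2 \<le> n \<and> sb Q * (2*Q+1) < 2^(n-1)" using N[OF nN] unfolding Q_def y_def .
    then have n2: "2 \<le> n" and P: "sb Q * (2*Q+1) < 2^(n-1)" by auto
    define Sn where "Sn = {w::bool list. length w = n}"
    define X where "X = {A. A \<noteq> {} \<and> A \<subset> Sn}"
    define Im where "Im = (\<lambda>e. {w. length w = n \<and> e (w, replicate Q 1)}) ` Eset n Q Q"
    have fE: "finite (Eset n Q Q)" and cE: "card (Eset n Q Q) \<le> 2 ^ (sb Q * (2*Q+1))"
      using Eset_bound[of n Q] by auto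
    have fIm: "finite Im" using fE by (simp add: Im_def)
    have cIm: "card Im \<le> 2 ^ (sb Q * (2*Q+1))"
      using card_image_le[OF fE, of "\<lambda>e. {w. length w = n \<and> e (w, replicate Q 1)}"] cE
      by (simp add: Im_def)
    have cSn: "card Sn = 2^n" unfolding Sn_def
      using card_lists_length_eq[of "UNIV::bool set" n] by (simp add: card_UNIV_bool)
    have fSn: "finite Sn" unfolding Sn_def
      using finite_lists_length_eq[of "UNIV::bool set" n] by simp
    have "replicate n False \<in> Sn" by (simp add: Sn_def)
    then have neSn: "Sn \<noteq> {}" by blast
    have XP: "X = Pow Sn - {{}, Sn}" unfolding X_def by auto
    have cX: "card X = 2^(2^n) - 2"
    proof -
      have "card {{}, Sn} = 2" using neSn by simp
      moreover have "card (Pow Sn - {{}, Sn}) = card (Pow Sn) - card {{}, Sn}"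
        by (rule card_Diff_subset) auto
      ultimately show ?thesis unfolding XP using fSn cSn by (simp add: card_Pow)
    qed
    have lt: "card Im < card X"
    proof -
      define m where "m = (2::nat)^n - 2"
      have "(4::nat) \<le> 2^n" using power_increasing[OF n2, of "2::nat"] by simp
      then have m2: "2 \<le> m" and em: "2^n = m + 2" by (auto simp: m_def)
      have "(2::nat)^n = 2^(Suc (n-1))" using n2 by simp
      also have "\<dots> = 2 * 2^(n-1)" by (rule power_Suc)
      finally have "(2::nat)^n = 2 * 2^(n-1)" .
      then have "sb Q * (2*Q+1) \<le> m" using P \<open>4 \<le> 2^n\<close> by (simp add: m_def)
      then have "card Im \<le> 2^m" using cIm power_increasing[of "sb Q * (2*Q+1)" m "2::nat"] by linarith
      moreover have "(2::nat)^m + 2 < 2^(2^n)"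
      proof -
        have "(2::nat)^(2^n) = 4 * 2^m" unfolding em by (simp add: power_add)
        moreover have "(2::nat) \<le> 2^m" using power_increasing[OF m2, of "2::nat"] by simp
        ultimately show ?thesis by linarith
      qed
      ultimately show ?thesis using cX by linarith
    qed
    have "\<not> X \<subseteq> Im"
    proof
      assume "X \<subseteq> Im"
      then have "card X \<le> card Im" using fIm by (rule card_mono[rotated])
      with lt show False by simp
    qed
    then obtain A where AX: "A \<in> X" and AIm: "A \<notin> Im" by blast
    show "\<exists>A::bool list set. A \<noteq> {} \<and> A \<subset> {w. length w = n} \<and>
     (\<forall>\<phi>. sentence \<phi> \<and> (\<forall>w\<in>A. models w \<phi>)
          \<and> (\<forall>w'. length w' = n \<and> w' \<notin> A \<longrightarrow> \<not> models w' \<phi>)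
        \<longrightarrow> real (nquant \<phi>) \<ge> real n / log 2 (real n))"
    proof (intro exI[of _ A] conjI allI impI)
      show "A \<noteq> {}" using AX by (simp add: X_def)
      show "A \<subset> {w. length w = n}" using AX by (simp add: X_def Sn_def)
      fix \<phi> assume h: "sentence \<phi> \<and> (\<forall>w\<in>A. models w \<phi>)
          \<and> (\<forall>w'. length w' = n \<and> w' \<notin> A \<longrightarrow> \<not> models w' \<phi>)"
      show "real (nquant \<phi>) \<ge> real n / log 2 (real n)"
      proof (rule ccontr)
        assume "\<not> real (nquant \<phi>) \<ge> real n / log 2 (real n)"
        then have "real (nquant \<phi>) < y" unfolding y_def by (rule not_le_imp_less)
        then have "of_int (int (nquant \<phi>)) \<le> y" by simp
        then have "int (nquant \<phi>) \<le> \<lfloor>y\<rfloor>" by (simp only: le_floor_iff)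
        then have q: "nquant \<phi> \<le> Q" unfolding Q_def by (metis nat_int nat_mono)
        obtain e where e: "e \<in> Eset n Q Q" "\<forall>w. length w = n \<longrightarrow> (models w \<phi> = e (w, replicate Q 1))"
          using sentence_lang[OF conjunct1[OF h] q] by blast
        have "A = {w. length w = n \<and> e (w, replicate Q 1)}"
        proof (intro set_eqI iffI)
          fix w assume "w \<in> A"
          then show "w \<in> {w. length w = n \<and> e (w, replicate Q 1)}"
            using AX h e(2) by (auto simp: X_def Sn_def)
        next
          fix w assume "w \<in> {w. length w = n \<and> e (w, replicate Q 1)}"
          then show "w \<in> A" using h e(2) by auto
        qed
        then have "A \<in> Im" unfolding Im_def using e(1) by (rule image_eqI)
        with AIm show False by simp
      qed
    qed
  qed
qed

end
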